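(* Let $D\in\mathbb{N}_1$ and let $\pi^+_D:=\sum_{n\in\mathcal{N}^g,\ \ell(n)\le D}\pi(n)$. Then the expected number of node expansions of $\mathrm{multiTS}(\infty,D)$ before (and including) reaching a node of $\mathcal{N}^g$ satisfies $$\mathbb{E}\bigl[N(\mathrm{multiTS}(\infty,D),\mathcal{N}^g)\bigr]\le \frac{D}{\pi^+_D}.$$
   Context: Setting: a finite action set $\mathcal{A}$, a set of states $\mathcal{S}$ with initial state $s_0$, a deterministic transition function $T:\mathcal{S}\times\mathcal{A}\to\mathcal{S}$, and a set of goal states $\mathcal{G}\subseteq\mathcal{S}$. Nodes are finite sequences of actions; the root $n_0$ is the empty sequence; $T(n)$ is the state reached from $s_0$ by applying the actions of $n$; for a node of $t$ actions, $\ell(n):=t+1$. A policy is a function $\pi$ from nodes to $[0,1]$ with $\pi(n_0)=1$ and $\pi(n)=\sum_{a\in\mathcal{A}}\pi(na)$, with conditional probabilities $\pi(a\mid n)=\pi(na)/\pi(n)$. The target set $\mathcal{N}^g$ is the set of nodes $n$ with $T(n)\in\mathcal{G}$ such that no proper prefix $m$ of $n$ has $T(m)\in\mathcal{G}$. A trial of depth $D$ samples a path $m_1=n_0, m_2=m_1a_1, \dots, m_D=m_{D-1}a_{D-1}$ with $a_i\sim\pi(\cdot\mid m_i)$ and tests $m_1,m_2,\dots$ in order, each test counting as one node expansion, stopping with success at the first $m_i$ with $T(m_i)\in\mathcal{G}$. $\mathrm{multiTS}(\infty,D)$ repeats independent trials of depth $D$ until a success; $N(\mathrm{multiTS}(\infty,D),\mathcal{N}^g)$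 is the total number of node expansions over all trials until success. (If $\pi^+_D=0$ the bound is $+\infty$.) *)

theory Defs
  imports "HOL-Probability.Probability" "HOL-Library.Sublist"
begin

text \<open>Nodes are action lists; appending action a to node n is n @ [a].
  T(n) is the state reached from s0 by applying the actions of n.\<close>

definition node_state :: "('s \<Rightarrow> 'a \<Rightarrow> 's) \<Rightarrow> 's \<Rightarrow> 'a list \<Rightarrow> 's" where
  "node_state T s0 n = foldl T s0 n"

definition ell :: "'a list \<Rightarrow> nat" where
  "ell n = length n + 1"

definition is_policy :: "('a::finite list \<Rightarrow> real) \<Rightarrow> bool" where
  "is_policy \<pi> \<longleftrightarrow> \<pi> [] = 1 \<and> (\<forall>n. 0 \<le> \<pi> n \<and> \<pi> n \<le> 1)
     \<and> (\<forall>n. \<pi> n = (\<Sum>a\<in>UNIV. \<pi> (n @ [a])))"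

definition target_set :: "('s \<Rightarrow> 'a \<Rightarrow> 's) \<Rightarrow> 's \<Rightarrow> 's set \<Rightarrow> 'a list set" where
  "target_set T s0 G = {n. node_state T s0 n \<in> G \<and>
     (\<forall>m. strict_prefix m n \<longrightarrow> node_state T s0 m \<notin> G)}"

text \<open>Conditional distribution pi(. | n); on nodes of probability 0 (never reached)
  an arbitrary (uniform) distribution is used.\<close>
definition cond_pmf :: "('a::finite list \<Rightarrow> real) \<Rightarrow> 'a list \<Rightarrow> 'a pmf" where
  "cond_pmf \<pi> n = embed_pmf (\<lambda>a. if \<pi> n = 0 then 1 / real CARD('a) else \<pi> (n @ [a]) / \<pi> n)"

fun sample_path :: "('a::finite list \<Rightarrow> real) \<Rightarrow> 'a list \<Rightarrow> nat \<Rightarrow> 'a list pmf" where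
  "sample_path \<pi> n 0 = return_pmf n"
| "sample_path \<pi> n (Suc k) = bind_pmf (cond_pmf \<pi> n) (\<lambda>a. sample_path \<pi> (n @ [a]) k)"

text \<open>A trial of depth D samples the path m_1 = [], ..., m_D (D-1 actions);
  the tested nodes are m_(i+1) = take i p for i < D.\<close>
definition trial_pmf :: "('a::finite list \<Rightarrow> real) \<Rightarrow> nat \<Rightarrow> 'a list pmf" where
  "trial_pmf \<pi> D = sample_path \<pi> [] (D - 1)"

definition trial_success :: "('s \<Rightarrow> 'a \<Rightarrow> 's) \<Rightarrow> 's \<Rightarrow> 's set \<Rightarrow> nat \<Rightarrow> 'a list \<Rightarrow> bool" where
  "trial_success T s0 G D p \<longleftrightarrow> (\<exists>i<D. node_state T s0 (take i p) \<in> G)"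

definition trial_cost :: "('s \<Rightarrow> 'a \<Rightarrow> 's) \<Rightarrow> 's \<Rightarrow> 's set \<Rightarrow> nat \<Rightarrow> 'a list \<Rightarrow> nat" where
  "trial_cost T s0 G D p =
     (if trial_success T s0 G D p
      then Suc (LEAST i. i < D \<and> node_state T s0 (take i p) \<in> G)
      else D)"

text \<open>Total number of node expansions of multiTS(infinity, D) on a stream of
  independent trial paths, until (and including) the first successful trial.\<close>
definition multiTS_expansions ::
  "('s \<Rightarrow> 'a \<Rightarrow> 's) \<Rightarrow> 's \<Rightarrow> 's set \<Rightarrow> nat \<Rightarrow> 'a list stream \<Rightarrow> ennreal" where
  "multiTS_expansions T s0 G D \<omega> =
     (if \<exists>k. trial_success T s0 G D (\<omega> !! k)
      then (\<Sum>j\<le>(LEAST k. trial_success T s0 G D (\<omega> !! k)).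
              of_nat (trial_cost T s0 G D (\<omega> !! j)))
      else \<infinity>)"

definition pi_plus ::
  "('a::finite list \<Rightarrow> real) \<Rightarrow> ('s \<Rightarrow> 'a \<Rightarrow> 's) \<Rightarrow> 's \<Rightarrow> 's set \<Rightarrow> nat \<Rightarrow> real" where
  "pi_plus \<pi> T s0 G D = (\<Sum>n\<in>{n\<in>target_set T s0 G. ell n \<le> D}. \<pi> n)"

end

theory Submission
  imports Defs
begin

lemma policy_root: "is_policy \<pi> \<Longrightarrow> \<pi> [] = 1"
  unfolding is_policy_def by blast
lemma policy_nn: "is_policy \<pi> \<Longrightarrow> 0 \<le> \<pi> n"
  unfolding is_policy_def by blast
lemma policy_le1: "is_policy \<pi> \<Longrightarrow> \<pi> n \<le> 1"
  unfolding is_policy_def by blast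
lemma policy_sum: "is_policy \<pi> \<Longrightarrow> \<pi> n = (\<Sum>a\<in>UNIV. \<pi> (n @ [a]))"
  unfolding is_policy_def by blast

lemma policy_child_le:
  assumes "is_policy \<pi>" shows "\<pi> (n @ [a]) \<le> \<pi> n"
proof -
  have "\<pi> n = (\<Sum>b\<in>UNIV. \<pi> (n @ [b]))" using assms by (rule policy_sum)
  also have "\<dots> \<ge> \<pi> (n @ [a])"
    by (rule member_le_sum) (use assms in \<open>auto simp: policy_nn\<close>)
  finally show ?thesis .
qed

lemma pmf_cond_pmf:
  fixes \<pi> :: "'a::finite list \<Rightarrow> real"
  assumes "is_policy \<pi>"
  shows "pmf (cond_pmf \<pi> n) a = (if \<pi> n = 0 then 1 / real CARD('a) else \<pi> (n @ [a]) / \<pi> n)"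
proof -
  define f where "f = (\<lambda>a::'a. if \<pi> n = 0 then 1 / real CARD('a) else \<pi> (n @ [a]) / \<pi> n)"
  have nn: "\<And>x. 0 \<le> f x" using assms by (auto simp: f_def policy_nn)
  have s: "(\<Sum>x\<in>UNIV. f x) = 1"
  proof (cases "\<pi> n = 0")
    case True then show ?thesis by (simp add: f_def)
  next
    case False
    have "(\<Sum>x\<in>UNIV. f x) = (\<Sum>x\<in>UNIV. \<pi> (n @ [x])) / \<pi> n"
      using False by (simp add: f_def sum_divide_distrib)
    also have "\<dots> = 1" using False policy_sum[OF assms, of n] by simp
    finally show ?thesis .
  qed
  have "(\<integral>\<^sup>+x. ennreal (f x) \<partial>count_space UNIV) = 1"
    by (simp add: nn_integral_count_space_finite nn s sum_ennreal)
  then show ?thesis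
    unfolding cond_pmf_def f_def[symmetric]
    by (subst pmf_embed_pmf) (use nn in \<open>auto simp: f_def\<close>)
qed

lemma cond_mult:
  assumes "is_policy \<pi>"
  shows "\<pi> n * pmf (cond_pmf \<pi> n) a = \<pi> (n @ [a])"
proof (cases "\<pi> n = 0")
  case True
  then have "\<pi> (n @ [a]) = 0" using policy_child_le[OF assms, of n a] policy_nn[OF assms, of "n @ [a]"]
    by simp
  then show ?thesis using True by simp
qed (simp add: pmf_cond_pmf[OF assms])

lemma set_sample_path: "p \<in> set_pmf (sample_path \<pi> n k) \<Longrightarrow> \<exists>m. p = n @ m \<and> length m = k"
proof (induction k arbitrary: n)
  case 0 then show ?case by simp
next
  case (Suc k)
  then obtain a where "p \<in> set_pmf (sample_path \<pi> (n @ [a]) k)" by auto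
  from Suc.IH[OF this] obtain m where "p = n @ [a] @ m" "length m = k" by auto
  then show ?case by (intro exI[of _ "a # m"]) simp
qed

lemma pmf_sample_path:
  assumes "is_policy \<pi>" "length m = k"
  shows "\<pi> n * pmf (sample_path \<pi> n k) (n @ m) = \<pi> (n @ m)"
  using assms(2)
proof (induction k arbitrary: n m)
  case 0 then show ?case by simp
next
  case (Suc k)
  then obtain b m' where m: "m = b # m'" "length m' = k" by (cases m) auto
  have "pmf (sample_path \<pi> n (Suc k)) (n @ m) =
        (\<integral>a. pmf (sample_path \<pi> (n @ [a]) k) (n @ m) \<partial>measure_pmf (cond_pmf \<pi> n))"
    by (simp add: pmf_bind)
  also have "\<dots> = (\<Sum>a\<in>UNIV. pmf (cond_pmf \<pi> n) a * pmf (sample_path \<pi> (n @ [a]) k) (n @ m))"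
    by (subst integral_measure_pmf_real[of UNIV]) (auto simp: ac_simps)
  also have "\<dots> = (\<Sum>a\<in>{b}. pmf (cond_pmf \<pi> n) a * pmf (sample_path \<pi> (n @ [a]) k) (n @ m))"
  proof (rule sum.mono_neutral_right)
    show "\<forall>a\<in>UNIV - {b}. pmf (cond_pmf \<pi> n) a * pmf (sample_path \<pi> (n @ [a]) k) (n @ m) = 0"
    proof
      fix a assume "a \<in> UNIV - {b}"
      then have "n @ m \<notin> set_pmf (sample_path \<pi> (n @ [a]) k)"
        using set_sample_path[of "n @ m" \<pi> "n @ [a]" k] m by auto
      then show "pmf (cond_pmf \<pi> n) a * pmf (sample_path \<pi> (n @ [a]) k) (n @ m) = 0"
        by (simp add: set_pmf_eq)
    qed
  qed auto
  also have "\<dots> = pmf (cond_pmf \<pi> n) b * pmf (sample_path \<pi> (n @ [b]) k) (n @ m)" by simp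
  finally have "\<pi> n * pmf (sample_path \<pi> n (Suc k)) (n @ m) =
      (\<pi> n * pmf (cond_pmf \<pi> n) b) * pmf (sample_path \<pi> (n @ [b]) k) ((n @ [b]) @ m')"
    using m by (simp only: mult.assoc append_assoc append_Cons append_Nil)
  also have "\<dots> = \<pi> (n @ [b]) * pmf (sample_path \<pi> (n @ [b]) k) ((n @ [b]) @ m')"
    by (simp only: cond_mult[OF assms(1)])
  also have "\<dots> = \<pi> ((n @ [b]) @ m')" by (rule Suc.IH[OF m(2)])
  also have "\<dots> = \<pi> (n @ m)" using m by simp
  finally show ?case .
qed


lemma map_take_sample_path:
  "map_pmf (take (length n + j)) (sample_path \<pi> n (j + k)) = sample_path \<pi> n j"
proof (induction j arbitrary: n)
  case 0
  have "map_pmf (take (length n)) (sample_path \<pi> n k) = map_pmf (\<lambda>_. n) (sample_path \<pi> n k)"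
    by (rule map_pmf_cong[OF refl]) (auto dest: set_sample_path)
  then show ?case by (simp add: map_pmf_const)
next
  case (Suc j)
  have "map_pmf (take (length n + Suc j)) (sample_path \<pi> n (Suc j + k)) =
        bind_pmf (cond_pmf \<pi> n) (\<lambda>a. map_pmf (take (length (n @ [a]) + j)) (sample_path \<pi> (n @ [a]) (j + k)))"
    by (simp add: map_bind_pmf)
  also have "\<dots> = bind_pmf (cond_pmf \<pi> n) (\<lambda>a. sample_path \<pi> (n @ [a]) j)"
    by (simp only: Suc.IH)
  finally show ?case by simp
qed

lemma prob_prefix:
  fixes \<pi> :: "'a::finite list \<Rightarrow> real"
  assumes "is_policy \<pi>" "length n \<le> k"
  shows "measure_pmf.prob (sample_path \<pi> [] k) {p. take (length n) p = n} = \<pi> n"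
proof -
  have e: "sample_path \<pi> [] k = sample_path \<pi> [] (length n + (k - length n))"
    using assms(2) by simp
  have "measure_pmf.prob (sample_path \<pi> [] k) {p. take (length n) p = n}
      = measure_pmf.prob (map_pmf (take (length ([]::'a list) + length n)) (sample_path \<pi> [] (length n + (k - length n)))) {n}"
    by (simp add: e vimage_def)
  also have "\<dots> = pmf (sample_path \<pi> [] (length n)) n"
    by (simp only: map_take_sample_path measure_pmf_single)
  also have "\<dots> = \<pi> [] * pmf (sample_path \<pi> [] (length n)) ([] @ n)"
    using policy_root[OF assms(1)] by simp
  also have "\<dots> = \<pi> n" using pmf_sample_path[OF assms(1), of n "length n" "[]"] by simp
  finally show ?thesis .
qed

lemma target_prefix_aux:
  assumes "n1 \<in> target_set T s0 G" "n2 \<in> target_set T s0 G"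
    "take (length n1) p = n1" "take (length n2) p = n2" "length n1 \<le> length n2"
  shows "n1 = n2"
proof (rule ccontr)
  assume ne: "n1 \<noteq> n2"
  have "take (length n1) n2 = n1"
    using assms(3,4,5) by (metis min.absorb1 take_take)
  then have "prefix n1 n2" by (metis take_is_prefix)
  with ne have "strict_prefix n1 n2" by auto
  then show False using assms(1,2) unfolding target_set_def by auto
qed

lemma target_prefix_unique:
  assumes "n1 \<in> target_set T s0 G" "n2 \<in> target_set T s0 G"
    "take (length n1) p = n1" "take (length n2) p = n2"
  shows "n1 = n2"
  using target_prefix_aux[OF assms] target_prefix_aux[OF assms(2,1,4,3)]
  by (cases "length n1 \<le> length n2") auto

lemma pi_plus_le_success:
  assumes "is_policy \<pi>"
  shows "pi_plus \<pi> T s0 G D \<le> measure_pmf.prob (trial_pmf \<pi> D) {p. trial_success T s0 G D p}"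
proof -
  define S where "S = {n\<in>target_set T s0 G. ell n \<le> D}"
  define A where "A = (\<lambda>n::'a list. {p. take (length n) p = n})"
  have fin: "finite S"
    by (rule finite_subset[OF _ finite_lists_length_le[of "UNIV::'a set" D]]) (auto simp: S_def ell_def)
  have disj: "disjoint_family_on A S"
    unfolding disjoint_family_on_def A_def S_def
    by (auto dest: target_prefix_unique[of _ T s0 G _ _])
  have "pi_plus \<pi> T s0 G D = (\<Sum>n\<in>S. measure_pmf.prob (trial_pmf \<pi> D) (A n))"
    unfolding pi_plus_def S_def[symmetric] A_def trial_pmf_def
    by (rule sum.cong[OF refl], rule prob_prefix[OF assms, symmetric]) (auto simp: S_def ell_def)
  also have "\<dots> = measure_pmf.prob (trial_pmf \<pi> D) (\<Union>n\<in>S. A n)"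
    by (rule measure_pmf.finite_measure_finite_Union[symmetric]) (use fin disj in auto)
  also have "\<dots> \<le> measure_pmf.prob (trial_pmf \<pi> D) {p. trial_success T s0 G D p}"
  proof (rule measure_pmf.finite_measure_mono)
    show "(\<Union>n\<in>S. A n) \<subseteq> {p. trial_success T s0 G D p}"
    proof safe
      fix n p assume "n \<in> S" "p \<in> A n"
      then show "trial_success T s0 G D p"
        unfolding trial_success_def S_def A_def target_set_def ell_def
        by (intro exI[of _ "length n"]) auto
    qed
  qed auto
  finally show ?thesis .
qed

lemma meas_F:
  fixes P :: "'b pmf"
  shows "(\<lambda>\<omega>. \<Prod>j<k. indicator A (\<omega> !! j) :: ennreal) \<in> borel_measurable (stream_space (measure_pmf P))"
proof (rule borel_measurable_prod_ennreal)
  fix j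
  have "(indicator A :: 'b \<Rightarrow> ennreal) \<in> borel_measurable (measure_pmf P)" by simp
  then show "(\<lambda>\<omega>. indicator A (\<omega> !! j) :: ennreal) \<in> borel_measurable (stream_space (measure_pmf P))"
    by (rule measurable_compose[OF measurable_snth])
qed

lemma int_F:
  fixes P :: "'b pmf"
  shows "(\<integral>\<^sup>+\<omega>. (\<Prod>j<k. indicator A (\<omega> !! j)) \<partial>stream_space (measure_pmf P))
     = ennreal (measure_pmf.prob P A) ^ k"
proof (induction k)
  case 0
  interpret S: prob_space "stream_space (measure_pmf P)"
    by (rule prob_space.prob_space_stream_space[OF prob_space_measure_pmf])
  show ?case by (simp add: S.emeasure_space_1)
next
  case (Suc k)
  have "(\<integral>\<^sup>+\<omega>. (\<Prod>j<Suc k. indicator A (\<omega> !! j)) \<partial>stream_space (measure_pmf P))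
     = (\<integral>\<^sup>+x. (\<integral>\<^sup>+\<omega>. (\<Prod>j<Suc k. indicator A ((x ## \<omega>) !! j)) \<partial>stream_space (measure_pmf P)) \<partial>measure_pmf P)"
    by (rule prob_space.nn_integral_stream_space[OF prob_space_measure_pmf meas_F])
  also have "\<dots> = (\<integral>\<^sup>+x. indicator A x * (\<integral>\<^sup>+\<omega>. (\<Prod>j<k. indicator A (\<omega> !! j)) \<partial>stream_space (measure_pmf P)) \<partial>measure_pmf P)"
  proof (rule nn_integral_cong)
    fix x
    have e: "\<And>\<omega>. (\<Prod>j<Suc k. indicator A ((x ## \<omega>) !! j) :: ennreal) = indicator A x * (\<Prod>j<k. indicator A (\<omega> !! j))"
      by (simp only: prod.lessThan_Suc_shift snth.simps stream.sel)
    show "(\<integral>\<^sup>+\<omega>. (\<Prod>j<Suc k. indicator A ((x ## \<omega>) !! j)) \<partial>stream_space (measure_pmf P)) =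
       indicator A x * (\<integral>\<^sup>+\<omega>. (\<Prod>j<k. indicator A (\<omega> !! j)) \<partial>stream_space (measure_pmf P))"
      by (simp only: e nn_integral_cmult[OF meas_F])
  qed
  also have "\<dots> = (\<integral>\<^sup>+x. ennreal (measure_pmf.prob P A) ^ k * indicator A x \<partial>measure_pmf P)"
    by (simp add: Suc.IH mult.commute)
  also have "\<dots> = ennreal (measure_pmf.prob P A) ^ Suc k"
    by (subst nn_integral_cmult_indicator) (auto simp: measure_pmf.emeasure_eq_measure mult.commute)
  finally show ?case .
qed


lemma trial_cost_le: "trial_cost T s0 G D p \<le> D"
proof (cases "trial_success T s0 G D p")
  case True
  then have "\<exists>i. i < D \<and> node_state T s0 (take i p) \<in> G" by (auto simp: trial_success_def)
  then have "(LEAST i. i < D \<and> node_state T s0 (take i p) \<in> G) < D" by (rule LeastI2_ex) auto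
  then show ?thesis using True by (simp add: trial_cost_def)
qed (simp add: trial_cost_def)

lemma pointwise:
  assumes "D \<ge> 1"
  shows "multiTS_expansions T s0 G D \<omega> \<le>
    of_nat D * (\<Sum>k. \<Prod>j<k. indicator {x. \<not> trial_success T s0 G D x} (\<omega> !! j) :: ennreal)"
proof (cases "\<exists>k. trial_success T s0 G D (\<omega> !! k)")
  case True
  define K where "K = (LEAST k. trial_success T s0 G D (\<omega> !! k))"
  have X: "(\<Sum>k<Suc K. 1) = (\<Sum>k<Suc K. \<Prod>j<k. indicator {x. \<not> trial_success T s0 G D x} (\<omega> !! j) :: ennreal)"
  proof (rule sum.cong[OF refl])
    fix k assume "k \<in> {..<Suc K}"
    then have kK: "k \<le> K" by simp
    have "\<And>j. j < k \<Longrightarrow> \<not> trial_success T s0 G D (\<omega> !! j)"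
    proof -
      fix j assume "j < k"
      with kK have "j < K" by simp
      then show "\<not> trial_success T s0 G D (\<omega> !! j)"
        unfolding K_def by (rule not_less_Least)
    qed
    then show "1 = (\<Prod>j<k. indicator {x. \<not> trial_success T s0 G D x} (\<omega> !! j) :: ennreal)"
      by (intro prod.neutral[symmetric]) auto
  qed
  have Y: "(\<Sum>k<Suc K. \<Prod>j<k. indicator {x. \<not> trial_success T s0 G D x} (\<omega> !! j) :: ennreal) \<le> (\<Sum>k. \<Prod>j<k. indicator {x. \<not> trial_success T s0 G D x} (\<omega> !! j) :: ennreal)"
    by (rule sum_le_suminf) auto
  have "(\<Sum>k<Suc K. 1::ennreal) \<le> (\<Sum>k. \<Prod>j<k. indicator {x. \<not> trial_success T s0 G D x} (\<omega> !! j) :: ennreal)"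
    using X Y by simp
  then have Z: "of_nat D * (\<Sum>k<Suc K. 1::ennreal) \<le> of_nat D * (\<Sum>k. \<Prod>j<k. indicator {x. \<not> trial_success T s0 G D x} (\<omega> !! j) :: ennreal)"
    by (rule mult_left_mono) simp
  have "multiTS_expansions T s0 G D \<omega> = (\<Sum>j\<le>K. of_nat (trial_cost T s0 G D (\<omega> !! j)))"
    using True by (simp add: multiTS_expansions_def K_def)
  also have "\<dots> \<le> (\<Sum>j\<le>K. of_nat D)"
    by (rule sum_mono) (simp add: trial_cost_le)
  also have "\<dots> = of_nat D * (\<Sum>k<Suc K. 1)" by (simp add: mult.commute)
  also note Z
  finally show ?thesis .
next
  case False
  then have one: "\<And>k. (\<Prod>j<k. indicator {x. \<not> trial_success T s0 G D x} (\<omega> !! j) :: ennreal) = 1"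
    by (intro prod.neutral) auto
  have "(\<Sum>k. ennreal 1) = top"
  proof (rule ccontr)
    assume "(\<Sum>k. ennreal 1) \<noteq> top"
    then have "summable (\<lambda>_::nat. 1::real)" by (intro summable_suminf_not_top) auto
    then show False by (simp add: summable_const_iff)
  qed
  then show ?thesis using assms by (simp add: one)
qed

lemma main_bound:
  fixes P :: "'b pmf" and A :: "'b set" and f :: "'b stream \<Rightarrow> ennreal"
  assumes "\<And>\<omega>. f \<omega> \<le> c * (\<Sum>k. \<Prod>j<k. indicator A (\<omega> !! j))"
    and "measure_pmf.prob P A < 1"
  shows "(\<integral>\<^sup>+\<omega>. f \<omega> \<partial>stream_space (measure_pmf P)) \<le> c * ennreal (1 / (1 - measure_pmf.prob P A))"
proof -
  let ?r = "measure_pmf.prob P A"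
  have "(\<integral>\<^sup>+\<omega>. f \<omega> \<partial>stream_space (measure_pmf P)) \<le>
        (\<integral>\<^sup>+\<omega>. (\<Sum>k. c * (\<Prod>j<k. indicator A (\<omega> !! j))) \<partial>stream_space (measure_pmf P))"
    by (rule nn_integral_mono) (simp add: assms(1))
  also have "\<dots> = (\<Sum>k. (\<integral>\<^sup>+\<omega>. c * (\<Prod>j<k. indicator A (\<omega> !! j)) \<partial>stream_space (measure_pmf P)))"
    by (rule nn_integral_suminf) (intro borel_measurable_times_ennreal measurable_const meas_F, simp) 
  also have "\<dots> = (\<Sum>k. c * ennreal (?r ^ k))"
    by (simp add: nn_integral_cmult meas_F int_F ennreal_power)
  also have "\<dots> = c * ennreal (\<Sum>k. ?r ^ k)"
    by (simp add: suminf_ennreal2 summable_geometric assms(2))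
  also have "(\<Sum>k. ?r ^ k) = 1 / (1 - ?r)"
    by (rule suminf_geometric) (use assms(2) in simp)
  finally show ?thesis .
qed

theorem theorem4:
  fixes \<pi> :: "'a::finite list \<Rightarrow> real" and T :: "'s \<Rightarrow> 'a \<Rightarrow> 's"
    and s0 :: 's and G :: "'s set" and D :: nat
  assumes "is_policy \<pi>" and "D \<ge> 1"
  shows "(\<integral>\<^sup>+ \<omega>. multiTS_expansions T s0 G D \<omega> \<partial>stream_space (measure_pmf (trial_pmf \<pi> D)))
           \<le> ennreal (real D) / ennreal (pi_plus \<pi> T s0 G D)"
proof -
  define pp where "pp = pi_plus \<pi> T s0 G D"
  define P where "P = trial_pmf \<pi> D"
  define A where "A = {x. \<not> trial_success T s0 G D x}"
  define q where "q = measure_pmf.prob P {p. trial_success T s0 G D p}"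
  have pp0: "pp \<ge> 0" unfolding pp_def pi_plus_def by (rule sum_nonneg) (rule policy_nn[OF assms(1)])
  show ?thesis
  proof (cases "pp = 0")
    case True
    then show ?thesis using assms(2) by (simp add: pp_def)
  next
    case False
    with pp0 have ppos: "pp > 0" by simp
    have qge: "pp \<le> q" unfolding pp_def q_def P_def by (rule pi_plus_le_success[OF assms(1)])
    have rA: "measure_pmf.prob P A = 1 - q"
    proof -
      have "A = space (measure_pmf P) - {p. trial_success T s0 G D p}" by (auto simp: A_def)
      then show ?thesis unfolding q_def
        by (simp only: measure_pmf.prob_compl sets_measure_pmf UNIV_I)
    qed
    have "(\<integral>\<^sup>+ \<omega>. multiTS_expansions T s0 G D \<omega> \<partial>stream_space (measure_pmf P))
          \<le> of_nat D * ennreal (1 / (1 - measure_pmf.prob P A))"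
      by (rule main_bound) (use pointwise[OF assms(2)] ppos qge rA in \<open>auto simp: A_def\<close>)
    also have "\<dots> = ennreal (real D / q)" using rA ppos qge
      by (simp add: ennreal_mult'' ennreal_of_nat_eq_real_of_nat flip: ennreal_mult)
    also have "\<dots> \<le> ennreal (real D / pp)"
      by (intro ennreal_leI divide_left_mono qge) (use ppos qge in \<open>auto intro: mult_pos_pos\<close>)
    also have "\<dots> = ennreal (real D) / ennreal pp" by (rule divide_ennreal[symmetric]) (use ppos in auto)
    finally show ?thesis by (simp add: pp_def P_def)
  qed
qed

end
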